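(* Let $n\ge1$ and let $T\in\mathcal{L}(\mathcal{H})$ be $n$-EP. Then $T^{2n}\ge 0$ if and only if $T^{2n-1}\omega(T)\ge0$.
   Context: $\mathcal{H}$ is a Hilbert space, $\mathcal{L}(\mathcal{H})$ the bounded operators on it; for $A\in\mathcal{L}(\mathcal{H})$, $A\ge0$ means $A$ is a positive operator ($\langle Ax,x\rangle\ge0$ for all $x$). For $T$ with closed range, $T^\dagger$ is its Moore–Penrose inverse (unique solution of $TT^\dagger T=T$, $T^\dagger TT^\dagger=T^\dagger$, $(T^\dagger T)^*=T^\dagger T$, $(TT^\dagger)^*=TT^\dagger$) and $\omega(T)=T(T^*T)^\dagger=(T^\dagger)^*$ is its Cauchy dual. $T$ is $n$-EP if it has closed range and $T^nT^\dagger=T^\dagger T^n$. *)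

theory Defs
  imports "HOL-Analysis.Analysis"
begin

(* Complex vector spaces (HOL only provides real ones). *)
class complex_vector = real_vector +
  fixes scaleC :: "complex \<Rightarrow> 'a \<Rightarrow> 'a"
  assumes scaleC_add_right: "scaleC a (x + y) = scaleC a x + scaleC a y"
    and scaleC_add_left: "scaleC (a + b) x = scaleC a x + scaleC b x"
    and scaleC_scaleC: "scaleC a (scaleC b x) = scaleC (a * b) x"
    and scaleC_one: "scaleC 1 x = x"
    and scaleR_scaleC: "scaleR r x = scaleC (complex_of_real r) x"

(* Complex Hilbert spaces: complete complex inner product spaces
   (inner product conjugate-linear in the first argument),
   whose norm is induced by the inner product. *)
class chilbert_space = complex_vector + real_normed_vector + complete_space +
  fixes cinner :: "'a \<Rightarrow> 'a \<Rightarrow> complex"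
  assumes cinner_commute: "cinner x y = cnj (cinner y x)"
    and cinner_add_left: "cinner (x + y) z = cinner x z + cinner y z"
    and cinner_scaleC_left: "cinner (scaleC r x) y = cnj r * cinner x y"
    and cinner_ge_zero: "0 \<le> Re (cinner x x)"
    and cinner_eq_zero_iff: "cinner x x = 0 \<longleftrightarrow> x = 0"
    and norm_eq_sqrt_cinner: "norm x = sqrt (Re (cinner x x))"

definition bounded_clinear :: "('a::chilbert_space \<Rightarrow> 'a) \<Rightarrow> bool" where
  "bounded_clinear T \<longleftrightarrow>
     (\<forall>x y. T (x + y) = T x + T y) \<and> (\<forall>c x. T (scaleC c x) = scaleC c (T x)) \<and>
     (\<exists>K. \<forall>x. norm (T x) \<le> norm x * K)"

definition adj :: "('a::chilbert_space \<Rightarrow> 'a) \<Rightarrow> ('a \<Rightarrow> 'a)" where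
  "adj T = (THE S. \<forall>x y. cinner (S x) y = cinner x (T y))"

definition positive_op :: "('a::chilbert_space \<Rightarrow> 'a) \<Rightarrow> bool" where
  "positive_op A \<longleftrightarrow> (\<forall>x. Im (cinner (A x) x) = 0 \<and> 0 \<le> Re (cinner (A x) x))"

definition mp_inv :: "('a::chilbert_space \<Rightarrow> 'a) \<Rightarrow> ('a \<Rightarrow> 'a)" where
  "mp_inv T = (THE S. bounded_clinear S \<and> T \<circ> S \<circ> T = T \<and> S \<circ> T \<circ> S = S \<and>
                      adj (S \<circ> T) = S \<circ> T \<and> adj (T \<circ> S) = T \<circ> S)"

(* Cauchy dual omega(T) = (T^dagger)^* *)
definition cdual :: "('a::chilbert_space \<Rightarrow> 'a) \<Rightarrow> ('a \<Rightarrow> 'a)" where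
  "cdual T = adj (mp_inv T)"

definition n_EP :: "nat \<Rightarrow> ('a::chilbert_space \<Rightarrow> 'a) \<Rightarrow> bool" where
  "n_EP n T \<longleftrightarrow> closed (range T) \<and> (T ^^ n) \<circ> mp_inv T = mp_inv T \<circ> (T ^^ n)"

end

theory Submission
  imports Defs
begin


context chilbert_space begin
subclass banach ..
end

lemma scaleC_zero_right [simp]: "scaleC c (0::'a::chilbert_space) = 0"
proof -
  have "scaleC c (0::'a) = scaleC c (0 + 0)" by simp
  also have "\<dots> = scaleC c 0 + scaleC c 0" by (rule scaleC_add_right)
  finally show ?thesis by simp
qed

lemma scaleC_zero_left [simp]: "scaleC 0 (x::'a::chilbert_space) = 0"
proof -
  have "scaleC 0 x = scaleC (0 + 0) x" by simp
  also have "\<dots> = scaleC 0 x + scaleC 0 x" by (rule scaleC_add_left)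
  finally show ?thesis by simp
qed

lemma scaleC_minus_right: "scaleC c (- x) = - scaleC c (x::'a::chilbert_space)"
proof -
  have "scaleC c (- x) + scaleC c x = 0"
    by (metis scaleC_add_right scaleC_zero_right add.left_inverse)
  then show ?thesis by (simp add: eq_neg_iff_add_eq_0)
qed

lemma scaleC_diff_right: "scaleC c (x - y) = scaleC c x - scaleC c (y::'a::chilbert_space)"
  by (metis diff_conv_add_uminus scaleC_add_right scaleC_minus_right)

lemma scaleC_minus_left: "scaleC (- c) x = - scaleC c (x::'a::chilbert_space)"
proof -
  have "scaleC (- c) x + scaleC c x = 0"
    by (metis scaleC_add_left scaleC_zero_left add.left_inverse)
  then show ?thesis by (simp add: eq_neg_iff_add_eq_0)
qed

lemma scaleC_diff_left: "scaleC (a - b) x = scaleC a x - scaleC b (x::'a::chilbert_space)"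
  by (metis diff_conv_add_uminus scaleC_add_left scaleC_minus_left)

lemma cinner_zero_left [simp]: "cinner 0 (y::'a::chilbert_space) = 0"
  by (metis add.right_neutral add_cancel_right_right cinner_add_left)

lemma cinner_minus_left: "cinner (- x) (y::'a::chilbert_space) = - cinner x y"
  by (metis add.left_inverse cinner_add_left cinner_zero_left eq_neg_iff_add_eq_0)

lemma cinner_diff_left: "cinner (x - z) (y::'a::chilbert_space) = cinner x y - cinner z y"
  by (metis cinner_add_left cinner_minus_left diff_conv_add_uminus)

lemma cinner_add_right: "cinner x (y + z) = cinner x y + cinner x (z::'a::chilbert_space)"
  by (metis cinner_add_left cinner_commute complex_cnj_add)

lemma cinner_scaleC_right: "cinner x (scaleC r y) = r * cinner x (y::'a::chilbert_space)"
  by (metis cinner_commute cinner_scaleC_left complex_cnj_cnj complex_cnj_mult)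

lemma cinner_zero_right [simp]: "cinner x (0::'a::chilbert_space) = 0"
  by (metis cinner_commute cinner_zero_left complex_cnj_zero)

lemma cinner_minus_right: "cinner x (- y) = - cinner x (y::'a::chilbert_space)"
  by (metis cinner_commute cinner_minus_left complex_cnj_minus)

lemma cinner_diff_right: "cinner x (y - z) = cinner x y - cinner x (z::'a::chilbert_space)"
  by (metis cinner_commute cinner_diff_left complex_cnj_diff)

lemma cinner_scaleR_left: "cinner (scaleR r x) y = of_real r * cinner x (y::'a::chilbert_space)"
  by (simp add: scaleR_scaleC cinner_scaleC_left)

lemma cinner_scaleR_right: "cinner x (scaleR r y) = of_real r * cinner x (y::'a::chilbert_space)"
  by (simp add: scaleR_scaleC cinner_scaleC_right)

lemma cinner_self_Im: "Im (cinner x (x::'a::chilbert_space)) = 0"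
proof -
  have "cinner x x = cnj (cinner x x)" by (rule cinner_commute)
  then have "Im (cinner x x) = Im (cnj (cinner x x))" by (rule arg_cong)
  then have "Im (cinner x x) = - Im (cinner x x)" by simp
  then show ?thesis by simp
qed

lemma norm_sq_cinner: "(norm x)^2 = Re (cinner x (x::'a::chilbert_space))"
  by (simp add: norm_eq_sqrt_cinner cinner_ge_zero)

lemma cinner_self: "cinner x x = of_real ((norm (x::'a::chilbert_space))^2)"
  by (simp add: norm_sq_cinner complex_eq_iff cinner_self_Im)

lemma cinner_expand: "cinner (x + y) (x + y) =
   cinner x x + cinner x y + cinner y x + cinner y (y::'a::chilbert_space)"
  by (simp add: cinner_add_left cinner_add_right)

lemma cinner_cnj_Re: "Re (cinner y x) = Re (cinner x (y::'a::chilbert_space))"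
  by (subst cinner_commute) simp

lemma norm_add_sq: "(norm (x + y))^2 = (norm x)^2 + 2 * Re (cinner x y) + (norm (y::'a::chilbert_space))^2"
  by (simp add: norm_sq_cinner cinner_expand cinner_cnj_Re[of x y])

lemma norm_diff_sq: "(norm (x - y))^2 = (norm x)^2 - 2 * Re (cinner x y) + (norm (y::'a::chilbert_space))^2"
  using norm_add_sq[of x "- y"] by (simp add: cinner_minus_right)

lemma norm_scaleC: "norm (scaleC c x) = cmod c * norm (x::'a::chilbert_space)"
proof -
  have "cinner (scaleC c x) (scaleC c x) = (cnj c * c) * cinner x x"
    by (simp add: cinner_scaleC_left cinner_scaleC_right mult.assoc)
  also have "cnj c * c = of_real ((cmod c)^2)"
    by (simp only: complex_norm_square mult.commute)
  also have "cinner x x = of_real ((norm x)^2)" by (rule cinner_self)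
  finally have "cinner (scaleC c x) (scaleC c x) = of_real ((cmod c * norm x)^2)"
    by (simp only: of_real_mult[symmetric] power_mult_distrib)
  then have "(norm (scaleC c x))^2 = (cmod c * norm x)^2"
    by (simp only: norm_sq_cinner Re_complex_of_real)
  then show ?thesis by (simp add: power2_eq_iff_nonneg)
qed

lemma pythagoras: "cinner x y = 0 \<Longrightarrow> (norm (x + y))^2 = (norm x)^2 + (norm (y::'a::chilbert_space))^2"
  by (simp add: norm_add_sq)

lemma cauchy_schwarz: "cmod (cinner x y) \<le> norm x * norm (y::'a::chilbert_space)"
proof (cases "x = 0")
  case True then show ?thesis by simp
next
  case False
  then have nx: "norm x > 0" by simp
  define a where "a = cinner x y / of_real ((norm x)^2)"
  define v where "v = y - scaleC a x"
  have "cinner x v = cinner x y - a * of_real ((norm x)^2)"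
    by (simp add: v_def cinner_diff_right cinner_scaleC_right cinner_self)
  then have xv: "cinner x v = 0" using nx by (simp add: a_def)
  have "cinner (scaleC a x) v = 0" by (simp add: cinner_scaleC_left xv)
  then have "(norm y)^2 = (norm (scaleC a x))^2 + (norm v)^2"
    using pythagoras[of "scaleC a x" v] by (simp add: v_def)
  then have "(norm (scaleC a x))^2 \<le> (norm y)^2" by simp
  then have "norm (scaleC a x) \<le> norm y" by (simp add: power2_le_iff_abs_le)
  then have "cmod a * norm x \<le> norm y" by (simp add: norm_scaleC)
  moreover have "cmod a = cmod (cinner x y) / (norm x)^2"
    by (simp add: a_def norm_divide norm_power del: of_real_power)
  ultimately have "cmod (cinner x y) / (norm x)^2 * norm x \<le> norm y" by simp
  then have "cmod (cinner x y) / norm x \<le> norm y" using nx by (simp add: power2_eq_square)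
  then show ?thesis using nx by (simp add: divide_le_eq mult.commute)
qed

lemma cinner_eq_right: "(\<And>z. cinner z x = cinner z (y::'a::chilbert_space)) \<Longrightarrow> x = y"
proof -
  assume h: "\<And>z. cinner z x = cinner z y"
  have "cinner (x - y) (x - y) = 0" using h[of "x-y"] by (simp add: cinner_diff_right)
  then show ?thesis by (simp add: cinner_eq_zero_iff)
qed

lemma cinner_eq_left: "(\<And>z. cinner x z = cinner (y::'a::chilbert_space) z) \<Longrightarrow> x = y"
  by (metis cinner_commute cinner_eq_right)



definition csubspace :: "'a::chilbert_space set \<Rightarrow> bool" where
  "csubspace M \<longleftrightarrow> 0 \<in> M \<and> (\<forall>x\<in>M. \<forall>y\<in>M. x + y \<in> M) \<and> (\<forall>c. \<forall>x\<in>M. scaleC c x \<in> M)"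

lemma csubspace_0: "csubspace M \<Longrightarrow> 0 \<in> M" by (simp add: csubspace_def)
lemma csubspace_add: "csubspace M \<Longrightarrow> x \<in> M \<Longrightarrow> y \<in> M \<Longrightarrow> x + y \<in> M" by (simp add: csubspace_def)
lemma csubspace_scaleC: "csubspace M \<Longrightarrow> x \<in> M \<Longrightarrow> scaleC c x \<in> M" by (simp add: csubspace_def)
lemma csubspace_scaleR: "csubspace M \<Longrightarrow> x \<in> M \<Longrightarrow> scaleR r x \<in> M"
  by (simp add: csubspace_def scaleR_scaleC)
lemma csubspace_minus: "csubspace M \<Longrightarrow> x \<in> M \<Longrightarrow> - x \<in> M"
  using csubspace_scaleR[of M x "-1"] by simp
lemma csubspace_diff: "csubspace M \<Longrightarrow> x \<in> M \<Longrightarrow> y \<in> M \<Longrightarrow> x - y \<in> M"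
  by (metis csubspace_add csubspace_minus diff_conv_add_uminus)

lemma parallelogram: "(norm (a - b))^2 + (norm (a + b))^2 = 2 * (norm a)^2 + 2 * (norm (b::'a::chilbert_space))^2"
  by (simp add: norm_add_sq norm_diff_sq)

lemma closest_point_exists:
  fixes M :: "'a::chilbert_space set"
  assumes sub: "csubspace M" and cl: "closed M"
  shows "\<exists>m\<in>M. \<forall>m'\<in>M. norm (x - m) \<le> norm (x - m')"
proof -
  define d where "d = infdist x M"
  have ne: "M \<noteq> {}" using csubspace_0[OF sub] by auto
  have d0: "d \<ge> 0" by (simp add: d_def infdist_nonneg)
  have dle: "d \<le> norm (x - m')" if "m' \<in> M" for m'
    using infdist_le[OF that, of x] by (simp add: d_def dist_norm)
  have "\<exists>m\<in>M. norm (x - m) < d + inverse (real (Suc k))" for k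
  proof -
    have "infdist x M < d + inverse (real (Suc k))" by (simp add: d_def)
    then have "(INF a\<in>M. dist x a) < d + inverse (real (Suc k))" by (simp add: infdist_notempty[OF ne])
    moreover have "bdd_below ((\<lambda>a. dist x a) ` M)" by (rule bdd_belowI[of _ 0]) auto
    ultimately show ?thesis using cINF_less_iff[OF ne, of "\<lambda>a. dist x a"] by (auto simp: dist_norm)
  qed
  then obtain m where mM: "\<And>k. m k \<in> M" and mlt: "\<And>k. norm (x - m k) < d + inverse (real (Suc k))"
    by metis
  define e where "e k = inverse (real (Suc k))" for k
  have e0: "0 < e k" "e k \<le> 1" for k by (auto simp: e_def field_simps)
  have key: "(norm (m i - m j))^2 \<le> 2 * (2 * d + 1) * (e i + e j)" for i j
  proof -
    let ?a = "x - m j" and ?b = "x - m i"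
    have mid: "scaleR (1/2) (m i + m j) \<in> M"
      by (intro csubspace_scaleR csubspace_add sub mM)
    have "?a + ?b = scaleR 2 (x - scaleR (1/2) (m i + m j))"
      by (simp add: algebra_simps scaleR_2)
    then have "norm (?a + ?b) = 2 * norm (x - scaleR (1/2) (m i + m j))" by simp
    then have "norm (?a + ?b) \<ge> 2 * d" using dle[OF mid] by simp
    then have ab: "(norm (?a + ?b))^2 \<ge> (2 * d)^2" using d0 by (intro power_mono) auto
    have "?a - ?b = m i - m j" by simp
    then have eq: "(norm (m i - m j))^2 = 2 * (norm ?a)^2 + 2 * (norm ?b)^2 - (norm (?a + ?b))^2"
      using parallelogram[of ?a ?b] by simp
    have a: "(norm ?a)^2 \<le> (d + e j)^2"
      using mlt[of j] by (intro power_mono) (auto simp: e_def)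
    have b: "(norm ?b)^2 \<le> (d + e i)^2"
      using mlt[of i] by (intro power_mono) (auto simp: e_def)
    have "(d + e j)^2 - d^2 \<le> (2 * d + 1) * e j"
      using e0[of j] d0 by (simp add: power2_eq_square algebra_simps mult_left_le)
    moreover have "(d + e i)^2 - d^2 \<le> (2 * d + 1) * e i"
      using e0[of i] d0 by (simp add: power2_eq_square algebra_simps mult_left_le)
    ultimately show ?thesis using eq a b ab by (simp add: power2_eq_square algebra_simps)
  qed
  have "Cauchy m"
  proof (rule metric_CauchyI)
    fix eps :: real assume "eps > 0"
    obtain N :: nat where N: "real N > 4 * (2 * d + 1) / eps^2" using reals_Archimedean2 by blast
    show "\<exists>N. \<forall>i\<ge>N. \<forall>j\<ge>N. dist (m i) (m j) < eps"
    proof (intro exI allI impI)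
      fix i j assume ij: "N \<le> i" "N \<le> j"
      have ei: "e i \<le> inverse (real (Suc N))" "e j \<le> inverse (real (Suc N))"
        using ij by (auto simp: e_def intro!: le_imp_inverse_le)
      have "(norm (m i - m j))^2 \<le> 2 * (2 * d + 1) * (2 * inverse (real (Suc N)))"
        using key[of i j] ei d0 by (smt (verit) mult_left_mono)
      also have "\<dots> = 4 * (2 * d + 1) / real (Suc N)" by (simp add: field_simps)
      also have "\<dots> < eps^2"
      proof -
        have "4 * (2 * d + 1) / eps^2 < real (Suc N)" using N by simp
        then show ?thesis using \<open>eps > 0\<close> by (simp add: field_simps)
      qed
      finally have "(norm (m i - m j))^2 < eps^2" .
      then have "norm (m i - m j) < eps" using \<open>eps > 0\<close> by (simp add: power_less_imp_less_base)
      then show "dist (m i) (m j) < eps" by (simp add: dist_norm)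
    qed
  qed
  then obtain L where L: "m \<longlonglongrightarrow> L" using Cauchy_convergent convergent_def by blast
  have LM: "L \<in> M" using closed_sequentially[OF cl] mM L by blast
  have "(\<lambda>k. norm (x - m k)) \<longlonglongrightarrow> norm (x - L)" by (intro tendsto_intros L)
  moreover have "(\<lambda>k. d + e k) \<longlonglongrightarrow> d + 0"
    unfolding e_def by (intro tendsto_intros LIMSEQ_inverse_real_of_nat)
  ultimately have "norm (x - L) \<le> d + 0"
    by (rule LIMSEQ_le) (use mlt less_imp_le e_def in auto)
  then show ?thesis using LM dle by force
qed

lemma closest_point_orth:
  fixes M :: "'a::chilbert_space set"
  assumes sub: "csubspace M" and mM: "m \<in> M" and min: "\<forall>m'\<in>M. norm (x - m) \<le> norm (x - m')"
    and uM: "u \<in> M"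
  shows "cinner u (x - m) = 0"
proof (rule ccontr)
  define w where "w = x - m"
  define c where "c = cinner u w"
  assume "cinner u (x - m) \<noteq> 0"
  then have c0: "c \<noteq> 0" by (simp add: c_def w_def)
  define t where "t = 1 / ((norm u)^2 + 1)"
  have p: "(norm u)^2 + 1 > 0" by (intro add_nonneg_pos) simp_all
  have t0: "t > 0" using p by (simp add: t_def)
  have "(norm u)^2 / ((norm u)^2 + 1) < 1" using p by (subst divide_less_eq_1_pos) auto
  then have tu: "t * (norm u)^2 < 1" by (simp add: t_def)
  define a where "a = of_real t * c"
  have m'M: "m + scaleC a u \<in> M" by (intro csubspace_add csubspace_scaleC sub mM uM)
  have eqx: "x - (m + scaleC a u) = w - scaleC a u" by (simp add: w_def)
  have "Re (cinner w (scaleC a u)) = t * (cmod c)^2"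
  proof -
    have "cinner w (scaleC a u) = of_real t * (c * cnj c)"
      by (simp add: cinner_scaleC_right a_def c_def cinner_commute[of w u] mult.assoc)
    also have "c * cnj c = of_real ((cmod c)^2)" by (simp only: complex_norm_square)
    finally show ?thesis by (simp only: of_real_mult[symmetric] Re_complex_of_real)
  qed
  moreover have "norm (scaleC a u) = t * cmod c * norm u"
    by (simp add: norm_scaleC a_def norm_mult t0 less_imp_le)
  ultimately have "(norm (w - scaleC a u))^2 = (norm w)^2 - 2 * (t * (cmod c)^2) + (t * cmod c * norm u)^2"
    by (simp add: norm_diff_sq)
  also have "\<dots> = (norm w)^2 - t * (cmod c)^2 * (2 - t * (norm u)^2)"
    by (simp add: power2_eq_square algebra_simps)
  also have "\<dots> < (norm w)^2"
  proof -
    have "t * (cmod c)^2 * (2 - t * (norm u)^2) > 0" using t0 c0 tu by (intro mult_pos_pos) auto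
    then show ?thesis by simp
  qed
  finally have "norm (w - scaleC a u) < norm w"
    by (simp add: power_less_imp_less_base)
  moreover have "norm w \<le> norm (w - scaleC a u)" using min m'M eqx by (metis w_def)
  ultimately show False by simp
qed

definition proj :: "'a::chilbert_space set \<Rightarrow> 'a \<Rightarrow> 'a" where
  "proj M x = (THE m. m \<in> M \<and> (\<forall>u\<in>M. cinner u (x - m) = 0))"

lemma proj_unique:
  fixes M :: "'a::chilbert_space set"
  assumes sub: "csubspace M" and "m1 \<in> M" "\<forall>u\<in>M. cinner u (x - m1) = 0"
    and "m2 \<in> M" "\<forall>u\<in>M. cinner u (x - m2) = 0"
  shows "m1 = m2"
proof -
  have d: "m1 - m2 \<in> M" by (intro csubspace_diff sub assms)
  have "cinner (m1 - m2) (x - m2) - cinner (m1 - m2) (x - m1) = 0" using d assms by simp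
  then have "cinner (m1 - m2) (m1 - m2) = 0" by (simp add: cinner_diff_right)
  then show ?thesis by (simp add: cinner_eq_zero_iff)
qed

lemma proj_exists:
  fixes M :: "'a::chilbert_space set"
  assumes sub: "csubspace M" and cl: "closed M"
  shows "\<exists>m. m \<in> M \<and> (\<forall>u\<in>M. cinner u (x - m) = 0)"
  using closest_point_exists[OF sub cl, of x] closest_point_orth[OF sub] by blast

lemma proj_props:
  fixes M :: "'a::chilbert_space set"
  assumes sub: "csubspace M" and cl: "closed M"
  shows "proj M x \<in> M \<and> (\<forall>u\<in>M. cinner u (x - proj M x) = 0)"
proof -
  obtain m where m: "m \<in> M \<and> (\<forall>u\<in>M. cinner u (x - m) = 0)" using proj_exists[OF sub cl] by blast
  have "proj M x = m" unfolding proj_def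
    by (rule the_equality) (use m proj_unique[OF sub] in blast)+
  then show ?thesis using m by simp
qed

lemma proj_in: "csubspace M \<Longrightarrow> closed M \<Longrightarrow> proj M x \<in> M"
  using proj_props by blast

lemma proj_orth: "csubspace M \<Longrightarrow> closed M \<Longrightarrow> u \<in> M \<Longrightarrow> cinner u (x - proj M x) = 0"
  using proj_props by blast

lemma proj_eqI:
  assumes "csubspace M" "closed M" "m \<in> M" "\<forall>u\<in>M. cinner u (x - m) = 0"
  shows "proj M x = m"
  using proj_unique[OF assms(1) proj_in[OF assms(1,2)] _ assms(3,4)] proj_orth[OF assms(1,2)] by blast

lemma proj_id: "csubspace M \<Longrightarrow> closed M \<Longrightarrow> m \<in> M \<Longrightarrow> proj M m = m"
  by (rule proj_eqI) auto

lemma proj_add: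
  assumes "csubspace M" "closed M"
  shows "proj M (x + y) = proj M x + proj M y"
proof (rule proj_eqI[OF assms])
  show "proj M x + proj M y \<in> M" by (intro csubspace_add proj_in assms)
  show "\<forall>u\<in>M. cinner u (x + y - (proj M x + proj M y)) = 0"
  proof
    fix u assume u: "u \<in> M"
    have eq: "x + y - (proj M x + proj M y) = (x - proj M x) + (y - proj M y)" by simp
    have "cinner u (x - proj M x) = 0" "cinner u (y - proj M y) = 0"
      using proj_orth[OF assms u] by auto
    then show "cinner u (x + y - (proj M x + proj M y)) = 0"
      by (simp only: eq cinner_add_right) simp
  qed
qed

lemma proj_scaleC:
  assumes "csubspace M" "closed M"
  shows "proj M (scaleC c x) = scaleC c (proj M x)"
proof (rule proj_eqI[OF assms])
  show "scaleC c (proj M x) \<in> M" by (intro csubspace_scaleC proj_in assms)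
  show "\<forall>u\<in>M. cinner u (scaleC c x - scaleC c (proj M x)) = 0"
    using proj_orth[OF assms] by (simp add: scaleC_diff_right[symmetric] cinner_scaleC_right)
qed

lemma proj_orth_zero:
  assumes "csubspace M" "closed M" "\<forall>v\<in>M. cinner v u = 0"
  shows "proj M u = 0"
  by (rule proj_eqI) (use assms csubspace_0 in auto)

lemma proj_sym:
  assumes "csubspace M" "closed M"
  shows "cinner (proj M x) y = cinner x (proj M y)"
proof -
  have 1: "cinner (proj M x) (y - proj M y) = 0" by (intro proj_orth proj_in assms)
  have 2: "cinner (proj M y) (x - proj M x) = 0" by (intro proj_orth proj_in assms)
  then have 2: "cinner (x - proj M x) (proj M y) = 0" by (metis cinner_commute complex_cnj_zero)
  have "cinner (proj M x) y = cinner (proj M x) (proj M y)" using 1 by (simp add: cinner_diff_right)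
  also have "\<dots> = cinner x (proj M y)" using 2 by (simp add: cinner_diff_left)
  finally show ?thesis .
qed

lemma proj_norms:
  assumes "csubspace M" "closed M"
  shows "norm (proj M x) \<le> norm x" "norm (x - proj M x) \<le> norm x"
proof -
  have o: "cinner (proj M x) (x - proj M x) = 0" by (intro proj_orth proj_in assms)
  have "(norm x)^2 = (norm (proj M x))^2 + (norm (x - proj M x))^2"
    using pythagoras[OF o] by simp
  then have "(norm (proj M x))^2 \<le> (norm x)^2" "(norm (x - proj M x))^2 \<le> (norm x)^2" by auto
  then show "norm (proj M x) \<le> norm x" "norm (x - proj M x) \<le> norm x"
    by (auto simp: power2_le_iff_abs_le)
qed



lemma bclin_add: "bounded_clinear T \<Longrightarrow> T (x + y) = T x + T y"
  by (simp add: bounded_clinear_def)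
lemma bclin_scaleC: "bounded_clinear T \<Longrightarrow> T (scaleC c x) = scaleC c (T x)"
  by (simp add: bounded_clinear_def)
lemma bclin_bounded: "bounded_clinear T \<Longrightarrow> \<exists>K. \<forall>x. norm (T x) \<le> norm x * K"
  by (simp add: bounded_clinear_def)

lemma bclin_linear: "bounded_clinear T \<Longrightarrow> bounded_linear T"
proof -
  assume T: "bounded_clinear T"
  obtain K where K: "\<forall>x. norm (T x) \<le> norm x * K" using bclin_bounded[OF T] by blast
  show "bounded_linear T"
    by (rule bounded_linear_intro[of T K]) (use T K in \<open>simp_all add: bclin_add bclin_scaleC scaleR_scaleC\<close>)
qed

lemma bclin_zero: "bounded_clinear T \<Longrightarrow> T 0 = 0"
  using bclin_linear bounded_linear.linear real_vector.linear_0 by blast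
lemma bclin_diff: "bounded_clinear T \<Longrightarrow> T (x - y) = T x - T y"
  using bclin_linear bounded_linear.linear real_vector.linear_diff by blast
lemma bclin_minus: "bounded_clinear T \<Longrightarrow> T (- x) = - T x"
  using bclin_linear bounded_linear.linear real_vector.linear_neg by blast
lemma bclin_scaleR: "bounded_clinear T \<Longrightarrow> T (scaleR r x) = scaleR r (T x)"
  using bclin_linear bounded_linear.linear linear_cmul by blast

lemma bclin_comp: "bounded_clinear S \<Longrightarrow> bounded_clinear T \<Longrightarrow> bounded_clinear (S \<circ> T)"
proof -
  assume S: "bounded_clinear S" and T: "bounded_clinear T"
  obtain K1 where K1: "\<forall>x. norm (S x) \<le> norm x * K1" and K1pos: "K1 > 0"
    using bounded_linear.pos_bounded[OF bclin_linear[OF S]] by blast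
  obtain K2 where K2: "\<forall>x. norm (T x) \<le> norm x * K2" using bclin_bounded[OF T] by blast
  have "norm (S (T x)) \<le> norm x * (K2 * K1)" for x
  proof -
    have "norm (S (T x)) \<le> norm (T x) * K1" using K1 by blast
    also have "\<dots> \<le> (norm x * K2) * K1" using K2 K1pos by (intro mult_right_mono) (auto simp: less_imp_le)
    finally show ?thesis by (simp add: mult.assoc)
  qed
  then show ?thesis using S T by (auto simp: bounded_clinear_def)
qed

lemma riesz:
  fixes f :: "'a::chilbert_space \<Rightarrow> complex"
  assumes add: "\<And>x y. f (x + y) = f x + f y" and sc: "\<And>c x. f (scaleC c x) = c * f x"
    and bd: "\<And>x. cmod (f x) \<le> norm x * K"
  shows "\<exists>y. \<forall>x. f x = cinner y x"
proof -
  have bl: "bounded_linear f"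
    by (rule bounded_linear_intro[of f K]) (simp_all add: add sc bd scaleR_scaleC scaleR_conv_of_real)
  define N where "N = {x. f x = 0}"
  have f0: "f 0 = 0" using real_vector.linear_0[OF bounded_linear.linear[OF bl]] .
  have subN: "csubspace N" by (simp add: csubspace_def N_def f0 add sc)
  have clN: "closed N" unfolding N_def
    by (rule closed_Collect_eq) (simp_all add: linear_continuous_on[OF bl])
  show ?thesis
  proof (cases "\<forall>x. f x = 0")
    case True then show ?thesis by (intro exI[of _ 0]) simp
  next
    case False
    then obtain x0 where x0: "f x0 \<noteq> 0" by blast
    define z where "z = x0 - proj N x0"
    have "f (proj N x0) = 0" using proj_in[OF subN clN, of x0] by (simp add: N_def)
    then have fz: "f z = f x0" by (simp add: z_def real_vector.linear_diff[OF bounded_linear.linear[OF bl]])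
    have zorth: "\<And>u. u \<in> N \<Longrightarrow> cinner u z = 0" unfolding z_def by (rule proj_orth[OF subN clN])
    have z0: "z \<noteq> 0" using fz x0 f0 by auto
    then have czz: "cinner z z \<noteq> 0" by (simp add: cinner_eq_zero_iff)
    have "f x = cinner (scaleC (cnj (f z / cinner z z)) z) x" for x
    proof -
      define v where "v = scaleC (f x) z - scaleC (f z) x"
      have "f v = 0" by (simp add: v_def real_vector.linear_diff[OF bounded_linear.linear[OF bl]] sc)
      then have "cinner v z = 0" using zorth by (simp add: N_def)
      then have "cinner z v = 0" by (metis cinner_commute complex_cnj_zero)
      then have "f x * cinner z z = f z * cinner z x"
        by (simp add: v_def cinner_diff_right cinner_scaleC_right)
      then have "f x = f z / cinner z z * cinner z x" using czz by (simp add: field_simps)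
      then show ?thesis by (simp add: cinner_scaleC_left)
    qed
    then show ?thesis by blast
  qed
qed

definition is_adj :: "('a::chilbert_space \<Rightarrow> 'a) \<Rightarrow> ('a \<Rightarrow> 'a) \<Rightarrow> bool" where
  "is_adj S T \<longleftrightarrow> (\<forall>x y. cinner (S x) y = cinner x (T y))"

lemma is_adj_unique: "is_adj S1 T \<Longrightarrow> is_adj S2 T \<Longrightarrow> S1 = S2"
  by (rule ext, rule cinner_eq_left) (simp add: is_adj_def)

lemma adj_eq: "is_adj S T \<Longrightarrow> adj T = S"
  unfolding adj_def by (rule the_equality) (auto simp: is_adj_def intro: is_adj_unique[unfolded is_adj_def])

lemma is_adj_sym: "is_adj S T \<Longrightarrow> is_adj T S"
  unfolding is_adj_def by (metis cinner_commute)

lemma is_adj_comp: "is_adj S1 T1 \<Longrightarrow> is_adj S2 T2 \<Longrightarrow> is_adj (S2 \<circ> S1) (T1 \<circ> T2)"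
  by (simp add: is_adj_def)

lemma bounded_has_adj:
  assumes T: "bounded_clinear T"
  shows "\<exists>S. is_adj S T"
proof -
  obtain K where K: "\<forall>x. norm (T x) \<le> norm x * K" using bclin_bounded[OF T] by blast
  have "\<exists>y. \<forall>z. cinner x (T z) = cinner y z" for x
  proof (rule riesz[of _ "norm x * K"])
    show "cinner x (T (a + b)) = cinner x (T a) + cinner x (T b)" for a b
      by (simp add: bclin_add[OF T] cinner_add_right)
    show "cinner x (T (scaleC c a)) = c * cinner x (T a)" for c a
      by (simp add: bclin_scaleC[OF T] cinner_scaleC_right)
    show "cmod (cinner x (T a)) \<le> norm a * (norm x * K)" for a
    proof -
      have "cmod (cinner x (T a)) \<le> norm x * norm (T a)" by (rule cauchy_schwarz)
      also have "\<dots> \<le> norm x * (norm a * K)" using K by (intro mult_left_mono) auto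
      finally show ?thesis by (simp add: algebra_simps)
    qed
  qed
  then obtain S where "\<forall>x z. cinner x (T z) = cinner (S x) z" by metis
  then show ?thesis by (auto simp: is_adj_def)
qed

lemma is_adj_adj: "bounded_clinear T \<Longrightarrow> is_adj (adj T) T"
  using bounded_has_adj adj_eq by metis

lemma adj_self_iff: "bounded_clinear A \<Longrightarrow> adj A = A \<longleftrightarrow> is_adj A A"
  using is_adj_adj adj_eq by metis

definition mp_cond :: "('a::chilbert_space \<Rightarrow> 'a) \<Rightarrow> ('a \<Rightarrow> 'a) \<Rightarrow> bool" where
  "mp_cond T S \<longleftrightarrow> bounded_clinear S \<and> T \<circ> S \<circ> T = T \<and> S \<circ> T \<circ> S = S \<and>
                      adj (S \<circ> T) = S \<circ> T \<and> adj (T \<circ> S) = T \<circ> S"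

lemma mp_unique:
  assumes T: "bounded_clinear T" and 1: "mp_cond T S1" and 2: "mp_cond T S2"
  shows "S1 = S2"
proof -
  have b1: "bounded_clinear S1" and b2: "bounded_clinear S2" using 1 2 by (auto simp: mp_cond_def)
  have a: "T (S1 (T x)) = T x" "T (S2 (T x)) = T x" "S1 (T (S1 x)) = S1 x" "S2 (T (S2 x)) = S2 x" for x
    using 1 2 by (auto simp: mp_cond_def fun_eq_iff)
  have s1: "is_adj (S1 \<circ> T) (S1 \<circ> T)" "is_adj (T \<circ> S1) (T \<circ> S1)"
    using 1 adj_self_iff bclin_comp b1 T by (auto simp: mp_cond_def)
  have s2: "is_adj (S2 \<circ> T) (S2 \<circ> T)" "is_adj (T \<circ> S2) (T \<circ> S2)"
    using 2 adj_self_iff bclin_comp b2 T by (auto simp: mp_cond_def)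
  have TS: "T (S1 x) = T (S2 x)" for x
  proof (rule cinner_eq_left)
    fix y
    have "cinner (T (S1 x)) y = cinner x (T (S1 y))" using s1(2) by (simp add: is_adj_def)
    also have "\<dots> = cinner x (T (S2 (T (S1 y))))" by (simp add: a)
    also have "\<dots> = cinner (T (S2 x)) (T (S1 y))" using s2(2) by (simp add: is_adj_def)
    also have "\<dots> = cinner (T (S1 (T (S2 x)))) y" using s1(2) by (simp add: is_adj_def)
    also have "\<dots> = cinner (T (S2 x)) y" by (simp add: a)
    finally show "cinner (T (S1 x)) y = cinner (T (S2 x)) y" .
  qed
  have ST: "S1 (T x) = S2 (T x)" for x
  proof (rule cinner_eq_left)
    fix y
    have "cinner (S1 (T x)) y = cinner x (S1 (T y))" using s1(1) by (simp add: is_adj_def)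
    also have "\<dots> = cinner x (S1 (T (S2 (T y))))" by (simp add: a)
    also have "\<dots> = cinner (S1 (T x)) (S2 (T y))" using s1(1) by (simp add: is_adj_def)
    also have "\<dots> = cinner (S2 (T (S1 (T x)))) y" using s2(1) by (simp add: is_adj_def)
    also have "\<dots> = cinner (S2 (T x)) y" by (simp add: a)
    finally show "cinner (S1 (T x)) y = cinner (S2 (T x)) y" .
  qed
  show ?thesis
  proof
    fix x
    have "S1 x = S1 (T (S1 x))" by (simp add: a)
    also have "\<dots> = S2 (T (S1 x))" by (rule ST)
    also have "\<dots> = S2 (T (S2 x))" by (simp add: TS)
    also have "\<dots> = S2 x" by (simp add: a)
    finally show "S1 x = S2 x" .
  qed
qed

lemma mp_inv_eq: "bounded_clinear T \<Longrightarrow> mp_cond T S \<Longrightarrow> mp_inv T = S"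
  unfolding mp_inv_def by (rule the_equality) (auto simp: mp_cond_def[symmetric] intro: mp_unique)



lemma range_csubspace: "bounded_clinear T \<Longrightarrow> csubspace (range T)"
proof -
  assume T: "bounded_clinear T"
  have "0 \<in> range T" using bclin_zero[OF T] by (metis rangeI)
  moreover have "T a + T b \<in> range T" for a b using bclin_add[OF T, of a b] by (metis rangeI)
  moreover have "scaleC c (T a) \<in> range T" for c a using bclin_scaleC[OF T, of c a] by (metis rangeI)
  ultimately show ?thesis unfolding csubspace_def by auto
qed

lemma range_diff: "bounded_clinear T \<Longrightarrow> a \<in> range T \<Longrightarrow> b \<in> range T \<Longrightarrow> a - b \<in> range T"
  by (rule csubspace_diff[OF range_csubspace])

lemma baire_step:
  fixes T :: "'a::chilbert_space \<Rightarrow> 'a"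
  assumes T: "bounded_clinear T" and cl: "closed (range T)"
  shows "\<exists>k::nat. \<exists>y0\<in>range T. \<exists>\<epsilon>>0. \<forall>y\<in>range T. norm (y - y0) < \<epsilon> \<longrightarrow> y \<in> closure (T ` cball 0 (real k))"
proof (rule ccontr)
  assume contra: "\<not> ?thesis"
  define R where "R = range T"
  define X where "X = top_of_set R"
  define G where "G = range (\<lambda>k::nat. R \<inter> closure (T ` cball 0 (real k)))"
  have cm: "completely_metrizable_space X"
    unfolding X_def R_def
    using completely_metrizable_space_closedin[OF completely_metrizable_space_euclidean] cl closed_closedin by blast
  have "X interior_of \<Union>G = {}"
  proof (rule Baire_category_alt)
    show "completely_metrizable_space X \<or> locally_compact_space X \<and> regular_space X" using cm by blast
    show "countable G" by (simp add: G_def)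
    fix F assume "F \<in> G"
    then obtain k :: nat where F: "F = R \<inter> closure (T ` cball 0 (real k))" by (auto simp: G_def)
    show "closedin X F \<and> X interior_of F = {}"
    proof
      show "closedin X F" unfolding F X_def by (rule closedin_closed_Int) simp
      show "X interior_of F = {}"
        unfolding interior_of_eq_empty
      proof (intro allI impI)
        fix U assume U: "openin X U \<and> U \<subseteq> F"
        show "U = {}"
        proof (rule ccontr)
          assume "U \<noteq> {}"
          then obtain y0 where y0: "y0 \<in> U" by blast
          obtain V where V: "open V" "U = R \<inter> V" using U by (auto simp: X_def openin_open)
          obtain e where e: "e > 0" "ball y0 e \<subseteq> V" using V y0 open_contains_ball by blast
          have "\<forall>y\<in>range T. norm (y - y0) < e \<longrightarrow> y \<in> closure (T ` cball 0 (real k))"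
          proof (intro ballI impI)
            fix y assume "y \<in> range T" "norm (y - y0) < e"
            then have "y \<in> U" using e V by (auto simp: R_def dist_norm norm_minus_commute)
            then show "y \<in> closure (T ` cball 0 (real k))" using U F by blast
          qed
          moreover have "y0 \<in> range T" using y0 V by (auto simp: R_def)
          ultimately show False using contra e by blast
        qed
      qed
    qed
  qed
  moreover have "\<Union>G = R"
  proof
    show "\<Union>G \<subseteq> R" by (auto simp: G_def)
    show "R \<subseteq> \<Union>G"
    proof
      fix y assume "y \<in> R"
      then obtain x where x: "y = T x" by (auto simp: R_def)
      obtain k :: nat where k: "norm x \<le> real k" using real_arch_simple by blast
      then have "y \<in> T ` cball 0 (real k)" using x by (auto simp: image_iff)
      then have "y \<in> R \<inter> closure (T ` cball 0 (real k))"
        using \<open>y \<in> R\<close> closure_subset[of "T ` cball 0 (real k)"] by (simp add: subset_iff)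
      then show "y \<in> \<Union>G" unfolding G_def by (rule UN_I[OF UNIV_I])
    qed
  qed
  ultimately have "X interior_of R = {}" by (simp only:)
  moreover have "X interior_of R = R" unfolding X_def
    using interior_of_topspace[of "top_of_set R"] by (simp only: topspace_euclidean_subtopology)
  moreover have "T 0 \<in> R" by (simp add: R_def)
  ultimately show False by simp
qed

lemma approx_step:
  fixes T :: "'a::chilbert_space \<Rightarrow> 'a"
  assumes T: "bounded_clinear T" and cl: "closed (range T)"
  shows "\<exists>M>0. \<forall>y\<in>range T. \<forall>\<eta>>0. \<exists>x. norm x \<le> M * norm y \<and> norm (y - T x) < \<eta>"
proof -
  obtain k :: nat and y0 \<epsilon> where y0: "y0 \<in> range T" and e: "\<epsilon> > 0"
    and H: "\<forall>y\<in>range T. norm (y - y0) < \<epsilon> \<longrightarrow> y \<in> closure (T ` cball 0 (real k))"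
    using baire_step[OF T cl] by blast
  have small: "\<exists>x. norm x \<le> 2 * real k \<and> norm (y - T x) < \<eta>"
    if y: "y \<in> range T" "norm y < \<epsilon>" and eta: "\<eta> > 0" for y \<eta>
  proof -
    have "y0 + y \<in> range T" using y0 y(1) csubspace_add[OF range_csubspace[OF T]] by blast
    moreover have "norm ((y0 + y) - y0) < \<epsilon>" using y by simp
    ultimately have c1: "y0 + y \<in> closure (T ` cball 0 (real k))" using H by blast
    have c2: "y0 \<in> closure (T ` cball 0 (real k))" using H y0 e by auto
    obtain x1 where x1: "x1 \<in> cball 0 (real k)" "dist (T x1) (y0 + y) < \<eta> / 2"
      using c1 eta unfolding closure_approachable by (metis half_gt_zero imageE)
    obtain x2 where x2: "x2 \<in> cball 0 (real k)" "dist (T x2) y0 < \<eta> / 2"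
      using c2 eta unfolding closure_approachable by (metis half_gt_zero imageE)
    have "norm (x1 - x2) \<le> norm x1 + norm x2" by (rule norm_triangle_ineq4)
    also have "\<dots> \<le> 2 * real k" using x1(1) x2(1) by auto
    finally have nx: "norm (x1 - x2) \<le> 2 * real k" .
    have "y - T (x1 - x2) = (y0 + y - T x1) - (y0 - T x2)" by (simp add: bclin_diff[OF T])
    then have "norm (y - T (x1 - x2)) \<le> norm (y0 + y - T x1) + norm (y0 - T x2)"
      by (metis norm_triangle_ineq4)
    also have "\<dots> < \<eta>" using x1(2) x2(2) by (simp add: dist_norm norm_minus_commute)
    finally show ?thesis using nx by blast
  qed
  define M where "M = 4 * real k / \<epsilon> + 1"
  have M0: "M > 0" using e by (simp add: M_def add_nonneg_pos)
  have "\<exists>x. norm x \<le> M * norm y \<and> norm (y - T x) < \<eta>" if y: "y \<in> range T" and eta: "\<eta> > 0" for y \<eta>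
  proof (cases "y = 0")
    case True then show ?thesis using eta by (intro exI[of _ 0]) (simp add: bclin_zero[OF T])
  next
    case False
    then have ny: "norm y > 0" by simp
    define l where "l = \<epsilon> / (2 * norm y)"
    have l0: "l > 0" using e ny by (simp add: l_def)
    have "scaleR l y \<in> range T" using y csubspace_scaleR[OF range_csubspace[OF T]] by blast
    moreover have "norm (scaleR l y) < \<epsilon>" using l0 ny e by (simp add: l_def)
    moreover have "l * \<eta> > 0" using l0 eta by simp
    ultimately obtain x' where x': "norm x' \<le> 2 * real k" "norm (scaleR l y - T x') < l * \<eta>"
      using small by blast
    define x where "x = scaleR (1 / l) x'"
    have "norm x = norm x' / l" using l0 by (simp add: x_def)
    also have "\<dots> \<le> 2 * real k / l" using x'(1) l0 by (simp add: divide_right_mono)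
    also have "\<dots> = 4 * real k / \<epsilon> * norm y" using e ny by (simp add: l_def field_simps)
    also have "\<dots> \<le> M * norm y" using ny by (simp add: M_def field_simps)
    finally have nx: "norm x \<le> M * norm y" .
    have "y - T x = scaleR (1 / l) (scaleR l y - T x')"
      using l0 by (simp add: x_def bclin_scaleR[OF T] algebra_simps)
    then have "norm (y - T x) = norm (scaleR l y - T x') / l" using l0 by simp
    also have "\<dots> < \<eta>" using x'(2) l0 by (simp add: divide_less_eq mult.commute)
    finally show ?thesis using nx by blast
  qed
  then show ?thesis using M0 by blast
qed

lemma open_mapping:
  fixes T :: "'a::chilbert_space \<Rightarrow> 'a"
  assumes T: "bounded_clinear T" and cl: "closed (range T)"
  shows "\<exists>C>0. \<forall>y\<in>range T. \<exists>x. T x = y \<and> norm x \<le> C * norm y"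
proof -
  obtain M where M0: "M > 0" and HM: "\<forall>y\<in>range T. \<forall>\<eta>>0. \<exists>x. norm x \<le> M * norm y \<and> norm (y - T x) < \<eta>"
    using approx_step[OF T cl] by blast
  define g where "g r e = (SOME x. norm x \<le> M * norm r \<and> norm (r - T x) < e)" for r e
  have g: "norm (g r e) \<le> M * norm r \<and> norm (r - T (g r e)) < e" if "r \<in> range T" "e > 0" for r e
    unfolding g_def by (rule someI_ex) (use HM that in blast)
  have "\<exists>x. T x = y \<and> norm x \<le> (2 * M) * norm y" if y: "y \<in> range T" for y
  proof (cases "y = 0")
    case True then show ?thesis by (intro exI[of _ 0]) (simp add: bclin_zero[OF T])
  next
    case False
    then have ny: "norm y > 0" by simp
    define e where "e j = norm y / 2 ^ Suc j" for j :: nat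
    have e0: "e j > 0" for j using ny by (simp add: e_def)
    define r where "r = rec_nat y (\<lambda>j rj. rj - T (g rj (e j)))"
    have r0: "r 0 = y" by (simp add: r_def)
    have rS: "r (Suc j) = r j - T (g (r j) (e j))" for j by (simp add: r_def)
    define xs where "xs j = g (r j) (e j)" for j
    have rR: "r j \<in> range T \<and> norm (r j) \<le> norm y / 2 ^ j" for j
    proof (induction j)
      case 0 then show ?case using y by (simp add: r0)
    next
      case (Suc j)
      then have "r j \<in> range T" by blast
      then have gg: "norm (r j - T (g (r j) (e j))) < e j" using g e0 by blast
      have "r (Suc j) \<in> range T" using Suc range_diff[OF T] by (simp add: rS)
      moreover have "norm (r (Suc j)) \<le> norm y / 2 ^ Suc j"
        using gg by (simp add: rS e_def)
      ultimately show ?case by blast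
    qed
    have xsb: "norm (xs j) \<le> (M * norm y) * (1/2) ^ j" for j
    proof -
      have "norm (xs j) \<le> M * norm (r j)" using g[of "r j" "e j"] rR e0 by (simp add: xs_def)
      also have "\<dots> \<le> M * (norm y / 2 ^ j)" using rR M0 by (intro mult_left_mono) auto
      finally show ?thesis by (simp add: power_divide)
    qed
    have sg: "summable (\<lambda>j. (M * norm y) * (1/2::real) ^ j)"
      by (intro summable_mult summable_geometric) simp
    have sn: "summable (\<lambda>j. norm (xs j))"
      by (rule summable_comparison_test[OF _ sg]) (use xsb in simp)
    have sx: "summable xs" by (rule summable_norm_cancel[OF sn])
    have "norm (suminf xs) \<le> (\<Sum>j. norm (xs j))" by (rule summable_norm[OF sn])
    also have "\<dots> \<le> (\<Sum>j. (M * norm y) * (1/2::real) ^ j)" by (rule suminf_le[OF xsb sn sg])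
    also have "\<dots> = 2 * M * norm y" by (simp add: suminf_mult suminf_geometric)
    finally have nb: "norm (suminf xs) \<le> 2 * M * norm y" .
    have ps: "T (\<Sum>j<m. xs j) = y - r m" for m
    proof (induction m)
      case 0 then show ?case by (simp add: r0 bclin_zero[OF T])
    next
      case (Suc m) then show ?case by (simp add: bclin_add[OF T] rS xs_def)
    qed
    have "(\<lambda>m. T (\<Sum>j<m. xs j)) \<longlonglongrightarrow> T (suminf xs)"
      by (rule bounded_linear.tendsto[OF bclin_linear[OF T] summable_LIMSEQ[OF sx]])
    then have l1: "(\<lambda>m. y - r m) \<longlonglongrightarrow> T (suminf xs)" by (simp add: ps)
    have "r \<longlonglongrightarrow> 0"
      by (rule Lim_null_comparison[of _ "\<lambda>j. norm y / 2 ^ j"])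
         (use rR in \<open>auto intro: always_eventually LIMSEQ_divide_realpow_zero\<close>)
    then have "(\<lambda>m. y - r m) \<longlonglongrightarrow> y - 0" by (intro tendsto_intros)
    then have "T (suminf xs) = y" using l1 LIMSEQ_unique by fastforce
    then show ?thesis using nb by (intro exI[of _ "suminf xs"]) simp
  qed
  then show ?thesis using M0 by (intro exI[of _ "2 * M"]) auto
qed



lemma ker_csubspace: "bounded_clinear T \<Longrightarrow> csubspace {x. T x = 0}"
  unfolding csubspace_def by (simp add: bclin_zero bclin_add bclin_scaleC)

lemma ker_closed: "bounded_clinear T \<Longrightarrow> closed {x. T x = 0}"
  by (rule closed_Collect_eq) (simp_all add: linear_continuous_on bclin_linear)

lemma mp_exists:
  fixes T :: "'a::chilbert_space \<Rightarrow> 'a"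
  assumes T: "bounded_clinear T" and cl: "closed (range T)"
  shows "\<exists>S. mp_cond T S"
proof -
  define R where "R = range T"
  define N where "N = {x. T x = 0}"
  have subR: "csubspace R" and clR: "closed R" using range_csubspace[OF T] cl by (simp_all add: R_def)
  have subN: "csubspace N" and clN: "closed N" using ker_csubspace[OF T] ker_closed[OF T] by (simp_all add: N_def)
  obtain C where C0: "C > 0" and HC: "\<forall>y\<in>R. \<exists>x. T x = y \<and> norm x \<le> C * norm y"
    using open_mapping[OF T cl] by (auto simp: R_def)
  define pre where "pre y = (SOME x. T x = y)" for y
  have pre: "T (pre y) = y" if "y \<in> R" for y
    unfolding pre_def by (rule someI_ex) (use that in \<open>auto simp: R_def\<close>)
  define S where "S y = pre (proj R y) - proj N (pre (proj R y))" for y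
  have perp_P: "cinner u (x - proj N x) = 0" if "u \<in> N" for u x
    by (rule proj_orth[OF subN clN that])
  have perpS: "cinner u (S y) = 0" if "u \<in> N" for u y
    unfolding S_def by (rule perp_P[OF that])
  have uniq: "a = b" if a: "\<forall>u\<in>N. cinner u a = 0" and b: "\<forall>u\<in>N. cinner u b = 0" and ab: "T a = T b" for a b
  proof -
    have "a - b \<in> N" using ab by (simp add: N_def bclin_diff[OF T])
    then have "cinner (a - b) a = 0" "cinner (a - b) b = 0" using a b by auto
    then have "cinner (a - b) (a - b) = 0" by (simp add: cinner_diff_right)
    then show ?thesis by (simp add: cinner_eq_zero_iff)
  qed
  have TPN: "T (proj N x) = 0" for x using proj_in[OF subN clN, of x] by (simp add: N_def)
  have TS: "T (S y) = proj R y" for y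
    using pre[OF proj_in[OF subR clR]] by (simp add: S_def bclin_diff[OF T] TPN)
  have S_alt: "S y = x' - proj N x'" if "T x' = proj R y" for x' y
    by (rule uniq) (use perpS perp_P that TS in \<open>auto simp: bclin_diff[OF T] TPN\<close>)
  have PRT: "proj R (T x) = T x" for x
    by (rule proj_id[OF subR clR]) (simp add: R_def)
  have STx: "S (T x) = x - proj N x" for x
    by (rule S_alt) (simp add: PRT)
  have Sadd: "S (a + b) = S a + S b" for a b
  proof (rule uniq)
    show "\<forall>u\<in>N. cinner u (S (a + b)) = 0" using perpS by blast
    show "\<forall>u\<in>N. cinner u (S a + S b) = 0" using perpS by (simp add: cinner_add_right)
    show "T (S (a + b)) = T (S a + S b)"
      by (simp add: TS bclin_add[OF T] proj_add[OF subR clR])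
  qed
  have SscaleC: "S (scaleC c a) = scaleC c (S a)" for c a
  proof (rule uniq)
    show "\<forall>u\<in>N. cinner u (S (scaleC c a)) = 0" using perpS by blast
    show "\<forall>u\<in>N. cinner u (scaleC c (S a)) = 0" using perpS by (simp add: cinner_scaleC_right)
    show "T (S (scaleC c a)) = T (scaleC c (S a))"
      by (simp add: TS bclin_scaleC[OF T] proj_scaleC[OF subR clR])
  qed
  have Sbound: "norm (S y) \<le> norm y * C" for y
  proof -
    obtain x' where x': "T x' = proj R y" "norm x' \<le> C * norm (proj R y)"
      using HC proj_in[OF subR clR, of y] by blast
    have "norm (S y) = norm (x' - proj N x')" using S_alt[OF x'(1)] by simp
    also have "\<dots> \<le> norm x'" by (rule proj_norms(2)[OF subN clN])
    also have "\<dots> \<le> C * norm (proj R y)" by (rule x'(2))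
    also have "\<dots> \<le> C * norm y" using C0 proj_norms(1)[OF subR clR, of y] by (intro mult_left_mono) auto
    finally show ?thesis by (simp add: mult.commute)
  qed
  have bS: "bounded_clinear S" unfolding bounded_clinear_def using Sadd SscaleC Sbound by blast
  have 1: "T \<circ> S \<circ> T = T" by (rule ext) (simp add: TS PRT)
  have 2: "S \<circ> T \<circ> S = S"
  proof (rule ext)
    fix y
    have "proj N (S y) = 0" by (rule proj_orth_zero[OF subN clN]) (use perpS in blast)
    then show "(S \<circ> T \<circ> S) y = S y" by (simp add: STx)
  qed
  have 3: "is_adj (S \<circ> T) (S \<circ> T)"
    unfolding is_adj_def by (simp add: STx cinner_diff_left cinner_diff_right proj_sym[OF subN clN])
  have 4: "is_adj (T \<circ> S) (T \<circ> S)"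
    unfolding is_adj_def by (simp add: TS proj_sym[OF subR clR])
  have "adj (S \<circ> T) = S \<circ> T" using 3 adj_self_iff bclin_comp[OF bS T] by blast
  moreover have "adj (T \<circ> S) = T \<circ> S" using 4 adj_self_iff bclin_comp[OF T bS] by blast
  ultimately have "mp_cond T S" using bS 1 2 by (simp add: mp_cond_def)
  then show ?thesis by blast
qed



theorem mainTheorem11:
  fixes T :: "'a::chilbert_space \<Rightarrow> 'a" and n :: nat
  assumes "n \<ge> 1" and "bounded_clinear T" and "n_EP n T"
  shows "positive_op (T ^^ (2 * n)) \<longleftrightarrow> positive_op ((T ^^ (2 * n - 1)) \<circ> cdual T)"
proof -
  have T: "bounded_clinear T" by fact
  obtain k where nk: "n = Suc k" using assms(1) by (cases n) auto
  have cl: "closed (range T)" and comm: "(T ^^ n) \<circ> mp_inv T = mp_inv T \<circ> (T ^^ n)"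
    using assms(3) by (auto simp: n_EP_def)
  define S where "S = mp_inv T"
  obtain S0 where "mp_cond T S0" using mp_exists[OF T cl] by blast
  then have mpc: "mp_cond T S" using mp_inv_eq[OF T] by (simp add: S_def)
  have bS: "bounded_clinear S" using mpc by (simp add: mp_cond_def)
  have a1: "T (S (T x)) = T x" for x using mpc by (auto simp: mp_cond_def fun_eq_iff)
  have symST: "is_adj (S \<circ> T) (S \<circ> T)"
    using mpc adj_self_iff bclin_comp[OF bS T] by (auto simp: mp_cond_def)
  define t where "t = adj T"
  define s where "s = adj S"
  have at: "is_adj t T" using is_adj_adj[OF T] by (simp add: t_def)
  have as: "is_adj s S" using is_adj_adj[OF bS] by (simp add: s_def)
  have cd: "cdual T = s" by (simp add: cdual_def s_def S_def)
  have STeq: "S \<circ> T = t \<circ> s" by (rule is_adj_unique[OF symST is_adj_comp[OF as at]])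
  have symTS: "is_adj (T \<circ> S) (T \<circ> S)"
    using mpc adj_self_iff bclin_comp[OF T bS] by (auto simp: mp_cond_def)
  have TSeq: "T \<circ> S = s \<circ> t" by (rule is_adj_unique[OF symTS is_adj_comp[OF at as]])
  have STp: "S (T x) = t (s x)" for x using STeq by (simp add: fun_eq_iff)
  have TSp: "s (t x) = T (S x)" for x using TSeq by (simp add: fun_eq_iff)
  have commp: "(T ^^ n) (S w) = S ((T ^^ n) w)" for w
    using comm by (simp add: fun_eq_iff S_def)
  have P1: "(T ^^ n) w = S (T ((T ^^ n) w))" for w
  proof -
    have "(T ^^ n) w = (T ^^ k) (T w)" by (simp add: nk funpow_swap1)
    also have "\<dots> = (T ^^ k) (T (S (T w)))" by (simp add: a1)
    also have "\<dots> = (T ^^ n) (S (T w))" by (simp add: nk funpow_swap1)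
    also have "\<dots> = S ((T ^^ n) (T w))" by (rule commp)
    also have "\<dots> = S (T ((T ^^ n) w))" by (simp add: funpow_swap1)
    finally show ?thesis .
  qed
  have e1: "2 * n - 1 = n + k" using nk by simp
  have e2: "2 * n = Suc (2 * n - 1)" using nk by simp
  have P2: "(T ^^ (2 * n - 1)) w = S (T ((T ^^ (2 * n - 1)) w))" for w
    using P1[of "(T ^^ k) w"] by (simp only: e1 funpow_add comp_apply)
  have P3: "(T ^^ n) (T (S y)) = (T ^^ n) y" for y
  proof -
    have "(T ^^ n) (T (S y)) = T ((T ^^ n) (S y))" by (simp add: funpow_swap1)
    also have "\<dots> = T (S ((T ^^ n) y))" by (simp add: commp)
    also have "\<dots> = T (S (T ((T ^^ k) y)))" by (simp add: nk)
    also have "\<dots> = T ((T ^^ k) y)" by (rule a1)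
    also have "\<dots> = (T ^^ n) y" by (simp add: nk)
    finally show ?thesis .
  qed
  have P4: "(T ^^ (2 * n)) (T (S y)) = (T ^^ (2 * n)) y" for y
  proof -
    have "2 * n = n + n" by simp
    then show ?thesis by (simp only: funpow_add comp_apply P3)
  qed
  have P5: "(T ^^ (2 * n)) y = T ((T ^^ (2 * n - 1)) y)" for y
    by (subst e2) simp
  have conj: "cinner w (t y) = cinner (T w) y" for w y
  proof -
    have "cinner w (t y) = cnj (cinner (t y) w)" by (rule cinner_commute)
    also have "\<dots> = cnj (cinner y (T w))" using at by (simp add: is_adj_def)
    also have "\<dots> = cinner (T w) y" by (metis cinner_commute)
    finally show ?thesis .
  qed
  have K1: "cinner (((T ^^ (2 * n - 1)) \<circ> s) x) x = cinner ((T ^^ (2 * n)) (s x)) (s x)" for x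
  proof -
    define w where "w = (T ^^ (2 * n - 1)) (s x)"
    have "cinner w x = cinner (S (T w)) x" using P2 by (simp add: w_def)
    also have "\<dots> = cinner w (S (T x))" using symST by (simp add: is_adj_def)
    also have "\<dots> = cinner w (t (s x))" by (simp add: STp)
    also have "\<dots> = cinner (T w) (s x)" by (rule conj)
    also have "\<dots> = cinner ((T ^^ (2 * n)) (s x)) (s x)" by (simp add: P5 w_def)
    finally show ?thesis by (simp add: w_def)
  qed
  have K2: "cinner ((T ^^ (2 * n)) y) y = cinner (((T ^^ (2 * n - 1)) \<circ> s) (t y)) (t y)" for y
  proof -
    define w where "w = (T ^^ (2 * n - 1)) (T (S y))"
    have "cinner (((T ^^ (2 * n - 1)) \<circ> s) (t y)) (t y) = cinner w (t y)"
      by (simp add: w_def TSp)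
    also have "\<dots> = cinner (T w) y" by (rule conj)
    also have "\<dots> = cinner ((T ^^ (2 * n)) (T (S y))) y" by (simp add: P5 w_def)
    also have "\<dots> = cinner ((T ^^ (2 * n)) y) y" by (simp add: P4)
    finally show ?thesis by simp
  qed
  show ?thesis unfolding cd positive_op_def
  proof
    assume H: "\<forall>x. Im (cinner ((T ^^ (2 * n)) x) x) = 0 \<and> 0 \<le> Re (cinner ((T ^^ (2 * n)) x) x)"
    show "\<forall>x. Im (cinner (((T ^^ (2 * n - 1)) \<circ> s) x) x) = 0 \<and> 0 \<le> Re (cinner (((T ^^ (2 * n - 1)) \<circ> s) x) x)"
      using H K1 by metis
  next
    assume H: "\<forall>x. Im (cinner (((T ^^ (2 * n - 1)) \<circ> s) x) x) = 0 \<and> 0 \<le> Re (cinner (((T ^^ (2 * n - 1)) \<circ> s) x) x)"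
    show "\<forall>x. Im (cinner ((T ^^ (2 * n)) x) x) = 0 \<and> 0 \<le> Re (cinner ((T ^^ (2 * n)) x) x)"
      using H K2 by metis
  qed
qed

end
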